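(* Let $W\subset\mathbb{P}^4$ be a singular cubic hypersurface and suppose $p$ is an ordinary double point of $W$. Then $\mathbb{P}^4\setminus W$ contains a cylinder, i.e. a Zariski open subset isomorphic to $Z\times\mathbb{A}^1$ for some variety $Z$.
   Context: Over $\mathbb{C}$. *)

theory Defs
  imports "HOL-Analysis.Analysis"
begin

text \<open>Points of complex affine n-space are represented as functions nat => complex
  vanishing outside the coordinates 0..n-1.\<close>

definition cspace :: "nat \<Rightarrow> (nat \<Rightarrow> complex) set" where
  "cspace n = {x. \<forall>i\<ge>n. x i = 0}"

definition smul :: "complex \<Rightarrow> (nat \<Rightarrow> complex) \<Rightarrow> (nat \<Rightarrow> complex)" where
  "smul c x = (\<lambda>i. c * x i)"

inductive_set polyfun :: "nat \<Rightarrow> ((nat \<Rightarrow> complex) \<Rightarrow> complex) set" for n :: nat where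
  pf_const: "(\<lambda>x. c) \<in> polyfun n"
| pf_var: "i < n \<Longrightarrow> (\<lambda>x. x i) \<in> polyfun n"
| pf_add: "f \<in> polyfun n \<Longrightarrow> g \<in> polyfun n \<Longrightarrow> (\<lambda>x. f x + g x) \<in> polyfun n"
| pf_mult: "f \<in> polyfun n \<Longrightarrow> g \<in> polyfun n \<Longrightarrow> (\<lambda>x. f x * g x) \<in> polyfun n"

definition homogeneous_of_degree ::
  "nat \<Rightarrow> nat \<Rightarrow> ((nat \<Rightarrow> complex) \<Rightarrow> complex) \<Rightarrow> bool" where
  "homogeneous_of_degree n d f \<longleftrightarrow> f \<in> polyfun n \<and> (\<forall>c x. f (smul c x) = c ^ d * f x)"

definition pdiff :: "nat \<Rightarrow> ((nat \<Rightarrow> complex) \<Rightarrow> complex) \<Rightarrow> (nat \<Rightarrow> complex) \<Rightarrow> complex" where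
  "pdiff i f = (\<lambda>x. deriv (\<lambda>t. f (x(i := t))) (x i))"

text \<open>Projective n-space: nonzero vectors of C^(n+1) (subsets are cones).\<close>

definition proj_space :: "nat \<Rightarrow> (nat \<Rightarrow> complex) set" where
  "proj_space n = cspace (Suc n) - {\<lambda>i. 0}"

definition proj_eq :: "(nat \<Rightarrow> complex) \<Rightarrow> (nat \<Rightarrow> complex) \<Rightarrow> bool" where
  "proj_eq x y \<longleftrightarrow> (\<exists>c. c \<noteq> 0 \<and> y = smul c x)"

definition proj_closed :: "nat \<Rightarrow> (nat \<Rightarrow> complex) set \<Rightarrow> bool" where
  "proj_closed n S \<longleftrightarrow> (\<exists>G. (\<forall>g\<in>G. \<exists>d. homogeneous_of_degree (Suc n) d g) \<and>
      S = {x \<in> proj_space n. \<forall>g\<in>G. g x = 0})"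

definition proj_open :: "nat \<Rightarrow> (nat \<Rightarrow> complex) set \<Rightarrow> bool" where
  "proj_open n U \<longleftrightarrow> U \<subseteq> proj_space n \<and> proj_closed n (proj_space n - U)"

text \<open>Ordinary double point of the hypersurface F = 0 in P^n: a singular point at which
  the Hessian of F has corank one (its kernel is the line spanned by p), i.e. the tangent
  cone is a nondegenerate quadric cone.\<close>

definition ordinary_double_point ::
  "nat \<Rightarrow> ((nat \<Rightarrow> complex) \<Rightarrow> complex) \<Rightarrow> (nat \<Rightarrow> complex) \<Rightarrow> bool" where
  "ordinary_double_point n F p \<longleftrightarrow>
     p \<in> proj_space n \<and> F p = 0 \<and> (\<forall>i\<le>n. pdiff i F p = 0) \<and>
     {v \<in> cspace (Suc n). \<forall>i\<le>n. (\<Sum>j\<le>n. pdiff j (pdiff i F) p * v j) = 0}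
       = {smul c p | c. True}"

definition aff_closed :: "nat \<Rightarrow> (nat \<Rightarrow> complex) set \<Rightarrow> bool" where
  "aff_closed m S \<longleftrightarrow> (\<exists>G \<subseteq> polyfun m. S = {x \<in> cspace m. \<forall>g\<in>G. g x = 0})"

definition aff_open :: "nat \<Rightarrow> (nat \<Rightarrow> complex) set \<Rightarrow> bool" where
  "aff_open m V \<longleftrightarrow> V \<subseteq> cspace m \<and> aff_closed m (cspace m - V)"

definition quasi_affine_variety :: "nat \<Rightarrow> (nat \<Rightarrow> complex) set \<Rightarrow> bool" where
  "quasi_affine_variety m Z \<longleftrightarrow>
     (\<exists>A V. aff_closed m A \<and> aff_open m V \<and> Z = A \<inter> V) \<and> Z \<noteq> {} \<and>
     (\<forall>C1 C2. aff_closed m C1 \<and> aff_closed m C2 \<and> Z \<subseteq> C1 \<union> C2 \<longrightarrow> Z \<subseteq> C1 \<or> Z \<subseteq> C2)"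

text \<open>Z x A^1 inside C^(m+1), the last coordinate being the A^1 factor.\<close>

definition cylinder_over :: "nat \<Rightarrow> (nat \<Rightarrow> complex) set \<Rightarrow> (nat \<Rightarrow> complex) set" where
  "cylinder_over m Z = {z(m := t) | z t. z \<in> Z}"

definition regular_on_proj ::
  "nat \<Rightarrow> (nat \<Rightarrow> complex) set \<Rightarrow> ((nat \<Rightarrow> complex) \<Rightarrow> complex) \<Rightarrow> bool" where
  "regular_on_proj n U f \<longleftrightarrow>
     (\<forall>x\<in>U. \<exists>a b d W. homogeneous_of_degree (Suc n) d a \<and> homogeneous_of_degree (Suc n) d b \<and>
        proj_open n W \<and> x \<in> W \<and> (\<forall>y\<in>U \<inter> W. b y \<noteq> 0 \<and> f y = a y / b y))"

definition morphism_proj_to_aff ::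
  "nat \<Rightarrow> (nat \<Rightarrow> complex) set \<Rightarrow> nat \<Rightarrow> ((nat \<Rightarrow> complex) \<Rightarrow> (nat \<Rightarrow> complex)) \<Rightarrow> bool" where
  "morphism_proj_to_aff n U m \<phi> \<longleftrightarrow>
     (\<forall>x\<in>U. \<phi> x \<in> cspace m) \<and> (\<forall>k<m. regular_on_proj n U (\<lambda>x. \<phi> x k))"

definition morphism_aff_to_proj ::
  "nat \<Rightarrow> (nat \<Rightarrow> complex) set \<Rightarrow> nat \<Rightarrow> ((nat \<Rightarrow> complex) \<Rightarrow> (nat \<Rightarrow> complex)) \<Rightarrow> bool" where
  "morphism_aff_to_proj m C n \<psi> \<longleftrightarrow>
     (\<forall>z\<in>C. \<exists>V h. aff_open m V \<and> z \<in> V \<and> (\<forall>i\<le>n. h i \<in> polyfun m) \<and>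
        (\<forall>y\<in>C \<inter> V. (\<exists>i\<le>n. h i y \<noteq> 0) \<and>
            (\<exists>c. c \<noteq> 0 \<and> \<psi> y = smul c (\<lambda>i. if i \<le> n then h i y else 0))))"

definition contains_cylinder :: "nat \<Rightarrow> (nat \<Rightarrow> complex) set \<Rightarrow> bool" where
  "contains_cylinder n X \<longleftrightarrow>
     (\<exists>U m Z \<phi> \<psi>. proj_open n U \<and> U \<subseteq> X \<and> quasi_affine_variety m Z \<and>
        morphism_proj_to_aff n U (Suc m) \<phi> \<and>
        morphism_aff_to_proj (Suc m) (cylinder_over m Z) n \<psi> \<and>
        (\<forall>x\<in>U. \<phi> x \<in> cylinder_over m Z) \<and>
        (\<forall>y\<in>cylinder_over m Z. \<psi> y \<in> U) \<and>
        (\<forall>x\<in>U. proj_eq x (\<psi> (\<phi> x))) \<and>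
        (\<forall>y\<in>cylinder_over m Z. \<phi> (\<psi> y) = y))"

end

theory Submission
  imports Defs "HOL-Computational_Algebra.Polynomial"
begin
lemma polyfun_sub: "f \<in> polyfun n \<Longrightarrow> g \<in> polyfun n \<Longrightarrow> (\<lambda>x. f x - g x) \<in> polyfun n"
proof -
  assume f: "f \<in> polyfun n" and g: "g \<in> polyfun n"
  have "(\<lambda>x. (-1) * g x) \<in> polyfun n" by (intro polyfun.pf_mult polyfun.pf_const g)
  from polyfun.pf_add[OF f this] show ?thesis by simp
qed

lemma polyfun_cmul: "f \<in> polyfun n \<Longrightarrow> (\<lambda>x. c * f x) \<in> polyfun n"
  by (intro polyfun.pf_mult polyfun.pf_const)

lemma polyfun_sum: "finite A \<Longrightarrow> (\<And>a. a \<in> A \<Longrightarrow> f a \<in> polyfun n) \<Longrightarrow> (\<lambda>x. \<Sum>a\<in>A. f a x) \<in> polyfun n"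
proof (induction A rule: finite_induct)
  case empty then show ?case using polyfun.pf_const[of 0] by simp
next
  case (insert a A)
  then show ?case using polyfun.pf_add[of "f a" n "\<lambda>x. \<Sum>a\<in>A. f a x"] by simp
qed

lemma polyfun_pow: "f \<in> polyfun n \<Longrightarrow> (\<lambda>x. f x ^ k) \<in> polyfun n"
proof (induction k)
  case 0 then show ?case using polyfun.pf_const[of 1] by simp
next
  case (Suc k) then show ?case using polyfun.pf_mult[of f n "\<lambda>x. f x ^ k"] by simp
qed

lemma polyfun_subst: "f \<in> polyfun n \<Longrightarrow> (\<And>t. t < n \<Longrightarrow> (\<lambda>y. X y t) \<in> polyfun m) \<Longrightarrow> (\<lambda>y. f (X y)) \<in> polyfun m"
proof (induction f rule: polyfun.induct)
  case (pf_const c) then show ?case by (simp add: polyfun.pf_const)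
next
  case (pf_var i) then show ?case by simp
next
  case (pf_add f g) then show ?case by (simp add: polyfun.pf_add)
next
  case (pf_mult f g) then show ?case by (simp add: polyfun.pf_mult)
qed

lemma polyfun_line: "f \<in> polyfun n \<Longrightarrow> \<exists>P. \<forall>t. f (\<lambda>k. x k + t * v k) = poly P t"
proof (induction f rule: polyfun.induct)
  case (pf_const c) then show ?case by (intro exI[of _ "[:c:]"]) simp
next
  case (pf_var i) then show ?case by (intro exI[of _ "[:x i, v i:]"]) (simp add: algebra_simps)
next
  case (pf_add f g)
  then obtain P Q where "\<forall>t. f (\<lambda>k. x k + t * v k) = poly P t" "\<forall>t. g (\<lambda>k. x k + t * v k) = poly Q t" by blast
  then show ?case by (intro exI[of _ "P + Q"]) simp
next
  case (pf_mult f g)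
  then obtain P Q where "\<forall>t. f (\<lambda>k. x k + t * v k) = poly P t" "\<forall>t. g (\<lambda>k. x k + t * v k) = poly Q t" by blast
  then show ?case by (intro exI[of _ "P * Q"]) simp
qed

lemma polyfun_pdiff_aux: "f \<in> polyfun n \<Longrightarrow> \<exists>g\<in>polyfun n. \<forall>x. ((\<lambda>s. f (x(a:=s))) has_field_derivative g x) (at (x a))"
proof (induction f rule: polyfun.induct)
  case (pf_const c) then show ?case by (intro bexI[of _ "\<lambda>x. 0"] polyfun.pf_const) auto
next
  case (pf_var i)
  show ?case
  proof (cases "i = a")
    case True
    then show ?thesis by (intro bexI[of _ "\<lambda>x. 1"] polyfun.pf_const) (auto intro!: derivative_eq_intros)
  next
    case False
    then show ?thesis by (intro bexI[of _ "\<lambda>x. 0"] polyfun.pf_const) (auto intro!: derivative_eq_intros)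
  qed
next
  case (pf_add f g)
  then obtain f' g' where "f' \<in> polyfun n" "g' \<in> polyfun n"
    "\<forall>x. ((\<lambda>s. f (x(a:=s))) has_field_derivative f' x) (at (x a))"
    "\<forall>x. ((\<lambda>s. g (x(a:=s))) has_field_derivative g' x) (at (x a))" by blast
  note h = this
  show ?case
  proof (intro bexI[of _ "\<lambda>x. f' x + g' x"] allI)
    fix x show "((\<lambda>s. f (x(a:=s)) + g (x(a:=s))) has_field_derivative f' x + g' x) (at (x a))"
      by (rule DERIV_add) (use h in blast)+
  qed (use h in \<open>auto intro: polyfun.intros\<close>)
next
  case (pf_mult f g)
  then obtain f' g' where "f' \<in> polyfun n" "g' \<in> polyfun n"
    "\<forall>x. ((\<lambda>s. f (x(a:=s))) has_field_derivative f' x) (at (x a))"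
    "\<forall>x. ((\<lambda>s. g (x(a:=s))) has_field_derivative g' x) (at (x a))" by blast
  note h = this
  show ?case
  proof (intro bexI[of _ "\<lambda>x. f' x * g x + f x * g' x"] allI)
    fix x
    have "((\<lambda>s. f (x(a:=s)) * g (x(a:=s))) has_field_derivative f' x * (\<lambda>s. g (x(a:=s))) (x a) + g' x * (\<lambda>s. f (x(a:=s))) (x a)) (at (x a))"
      by (rule DERIV_mult) (use h in blast)+
    then show "((\<lambda>s. f (x(a:=s)) * g (x(a:=s))) has_field_derivative f' x * g x + f x * g' x) (at (x a))" by (simp add: mult.commute)
  qed (use h pf_mult in \<open>auto intro: polyfun.intros\<close>)
qed

lemma pdiff_char: "f \<in> polyfun n \<Longrightarrow> pdiff a f \<in> polyfun n \<and> (\<forall>x. ((\<lambda>s. f (x(a:=s))) has_field_derivative pdiff a f x) (at (x a)))"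
proof -
  assume "f \<in> polyfun n"
  from polyfun_pdiff_aux[OF this, of a] obtain g where g: "g \<in> polyfun n" "\<forall>x. ((\<lambda>s. f (x(a:=s))) has_field_derivative g x) (at (x a))" by blast
  have "pdiff a f = g" unfolding pdiff_def using g(2) by (auto intro!: ext DERIV_imp_deriv)
  with g show ?thesis by simp
qed

lemma pdiff_const[simp]: "pdiff a (\<lambda>x. c) = (\<lambda>x. 0)"
  unfolding pdiff_def by simp

lemma pdiff_var: "pdiff a (\<lambda>x. x i) = (\<lambda>x. if i = a then 1 else 0)"
  unfolding pdiff_def by (auto intro!: ext DERIV_imp_deriv derivative_eq_intros)

lemma pdiff_add: "f \<in> polyfun n \<Longrightarrow> g \<in> polyfun n \<Longrightarrow> pdiff a (\<lambda>x. f x + g x) = (\<lambda>x. pdiff a f x + pdiff a g x)"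
proof -
  assume f: "f \<in> polyfun n" and g: "g \<in> polyfun n"
  show ?thesis unfolding pdiff_def[of a "\<lambda>x. f x + g x"]
  proof (intro ext DERIV_imp_deriv)
    fix x show "((\<lambda>t. f (x(a := t)) + g (x(a := t))) has_field_derivative pdiff a f x + pdiff a g x) (at (x a))"
      by (rule DERIV_add) (use pdiff_char[OF f] pdiff_char[OF g] in blast)+
  qed
qed

lemma pdiff_mult: "f \<in> polyfun n \<Longrightarrow> g \<in> polyfun n \<Longrightarrow> pdiff a (\<lambda>x. f x * g x) = (\<lambda>x. pdiff a f x * g x + f x * pdiff a g x)"
proof -
  assume f: "f \<in> polyfun n" and g: "g \<in> polyfun n"
  show ?thesis unfolding pdiff_def[of a "\<lambda>x. f x * g x"]
  proof (intro ext DERIV_imp_deriv)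
    fix x
    have "((\<lambda>s. f (x(a:=s)) * g (x(a:=s))) has_field_derivative pdiff a f x * (\<lambda>s. g (x(a:=s))) (x a) + pdiff a g x * (\<lambda>s. f (x(a:=s))) (x a)) (at (x a))"
      by (rule DERIV_mult) (use pdiff_char[OF f] pdiff_char[OF g] in blast)+
    then show "((\<lambda>s. f (x(a:=s)) * g (x(a:=s))) has_field_derivative pdiff a f x * g x + f x * pdiff a g x) (at (x a))"
      by (simp add: mult.commute)
  qed
qed

lemma pdiff_polyfun: "f \<in> polyfun n \<Longrightarrow> pdiff a f \<in> polyfun n"
  using pdiff_char by blast

lemma pdiff_swap: "f \<in> polyfun n \<Longrightarrow> pdiff a (pdiff b f) = pdiff b (pdiff a f)"
proof (induction f rule: polyfun.induct)
  case (pf_const c) then show ?case by simp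
next
  case (pf_var i) then show ?case by (simp add: pdiff_var)
next
  case (pf_add f g)
  note P = pdiff_polyfun[OF pf_add.hyps(1)] pdiff_polyfun[OF pf_add.hyps(2)]
  show ?case using pf_add.IH P
    by (simp add: pdiff_add[OF pf_add.hyps(1) pf_add.hyps(2)] pdiff_add[OF P(1) P(2)])
next
  case (pf_mult f g)
  have f: "f \<in> polyfun n" and g: "g \<in> polyfun n" by fact+
  note P = pdiff_polyfun[OF f] pdiff_polyfun[OF g]
  have m1: "(\<lambda>x. pdiff b f x * g x) \<in> polyfun n" "(\<lambda>x. f x * pdiff b g x) \<in> polyfun n"
    "(\<lambda>x. pdiff a f x * g x) \<in> polyfun n" "(\<lambda>x. f x * pdiff a g x) \<in> polyfun n"
    using P f g by (auto intro: polyfun.pf_mult)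
  show ?case
    apply (simp add: pdiff_mult[OF f g] pdiff_add[OF m1(1,2)] pdiff_add[OF m1(3,4)]
        pdiff_mult[OF P(1) g] pdiff_mult[OF f P(2)] pf_mult.IH)
    by (auto intro!: ext simp: algebra_simps)
qed

lemma pdiff_line: "f \<in> polyfun n \<Longrightarrow>
  ((\<lambda>t. f (\<lambda>k. x k + t * v k)) has_field_derivative (\<Sum>a<n. pdiff a f (\<lambda>k. x k + t * v k) * v a)) (at t)"
proof (induction f arbitrary: t rule: polyfun.induct)
  case (pf_const c) then show ?case by simp
next
  case (pf_var i)
  have "(\<Sum>a<n. (if i = a then 1 else 0) * v a) = v i" proof -
    have "(\<Sum>a<n. (if i = a then 1 else 0) * v a) = (\<Sum>a<n. if i = a then v a else 0)" by (intro sum.cong) auto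
    then show ?thesis using pf_var by simp
  qed
  then show ?case by (auto simp: pdiff_var intro!: derivative_eq_intros)
next
  case (pf_add f g)
  have "((\<lambda>t. f (\<lambda>k. x k + t * v k) + g (\<lambda>k. x k + t * v k)) has_field_derivative
     (\<Sum>a<n. pdiff a f (\<lambda>k. x k + t * v k) * v a) + (\<Sum>a<n. pdiff a g (\<lambda>k. x k + t * v k) * v a)) (at t)"
    by (rule DERIV_add) (use pf_add.IH in blast)+
  then show ?case by (simp add: pdiff_add[OF pf_add.hyps(1,2)] sum.distrib algebra_simps)
next
  case (pf_mult f g)
  let ?y = "\<lambda>t. (\<lambda>k. x k + t * v k)"
  have "((\<lambda>t. f (?y t) * g (?y t)) has_field_derivative
     (\<Sum>a<n. pdiff a f (?y t) * v a) * g (?y t) + (\<Sum>a<n. pdiff a g (?y t) * v a) * f (?y t)) (at t)"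
    by (rule DERIV_mult) (use pf_mult.IH in blast)+
  then show ?case by (simp add: pdiff_mult[OF pf_mult.hyps(1,2)] sum.distrib algebra_simps sum_distrib_left sum_distrib_right)
qed

lemma poly_eq_off0: fixes A B :: "complex poly" assumes "\<forall>t. t \<noteq> 0 \<longrightarrow> poly A t = poly B t" shows "A = B"
proof (rule ccontr)
  assume "A \<noteq> B"
  then have "A - B \<noteq> 0" by simp
  then have "finite {t. poly (A - B) t = 0}" by (rule poly_roots_finite)
  moreover have "UNIV - {0} \<subseteq> {t. poly (A - B) t = 0}" using assms by auto
  ultimately have "finite (UNIV - {0::complex})" by (rule rev_finite_subset)
  then show False by (simp add: infinite_UNIV_char_0)
qed

lemma deg_reflect: fixes P R :: "complex poly"
  assumes h: "\<forall>t. t \<noteq> 0 \<longrightarrow> poly P t = t^d * poly R (inverse t)" shows "degree R \<le> d"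
proof (rule ccontr)
  assume "\<not> degree R \<le> d"
  then have lt: "d < degree R" by simp
  let ?m = "degree R"
  have "monom 1 ?m * P = monom 1 d * reflect_poly R"
  proof (rule poly_eq_off0, intro allI impI)
    fix t :: complex assume t: "t \<noteq> 0"
    have "poly (monom 1 ?m * P) t = t^?m * (t^d * poly R (inverse t))" using h t by (simp add: poly_monom)
    also have "\<dots> = t^d * (t^?m * poly R (inverse t))" by (simp add: algebra_simps)
    also have "\<dots> = poly (monom 1 d * reflect_poly R) t" using t by (simp add: poly_monom poly_reflect_poly_nz)
    finally show "poly (monom 1 ?m * P) t = poly (monom 1 d * reflect_poly R) t" .
  qed
  then have "coeff (monom 1 ?m * P) d = coeff (monom 1 d * reflect_poly R) d" by simp
  moreover have "coeff (monom 1 ?m * P) d = 0" using lt by (simp add: coeff_monom_mult)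
  moreover have "coeff (monom 1 d * reflect_poly R) d = lead_coeff R" by (simp add: coeff_monom_mult coeff_reflect_poly)
  moreover have "R \<noteq> 0" using lt by auto
  ultimately show False by simp
qed

lemma cubic_poly_expand: fixes P :: "complex poly" assumes "degree P \<le> 3"
  shows "poly P t = coeff P 0 + coeff P 1 * t + coeff P 2 * t^2 + coeff P 3 * t^3"
proof -
  have "poly P t = (\<Sum>i\<le>degree P. coeff P i * t ^ i)" by (rule poly_altdef)
  also have "\<dots> = (\<Sum>i\<le>3. coeff P i * t ^ i)"
    using assms by (intro sum.mono_neutral_left) (auto simp: coeff_eq_0)
  also have "\<dots> = coeff P 0 + coeff P 1 * t + coeff P 2 * t^2 + coeff P 3 * t^3"
    by (simp add: numeral_3_eq_3 numeral_2_eq_2)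
  finally show ?thesis .
qed

definition QF :: "((nat \<Rightarrow> complex) \<Rightarrow> complex) \<Rightarrow> (nat \<Rightarrow> complex) \<Rightarrow> (nat \<Rightarrow> complex) \<Rightarrow> complex" where
  "QF F p v = (\<Sum>a<5. \<Sum>b<5. pdiff b (pdiff a F) p * v b * v a) / 2"

lemma core_expand:
  assumes Fp: "F \<in> polyfun 5" and hom: "\<forall>c x. F (smul c x) = c^3 * F x"
    and F0: "F p = 0" and sing: "\<forall>i\<le>4. pdiff i F p = 0"
  shows "F (\<lambda>k. v k + s * p k) = s * QF F p v + F v"
proof -
  obtain R where R: "\<forall>s. F (\<lambda>k. v k + s * p k) = poly R s" using polyfun_line[OF Fp, of v p] by blast
  obtain P where P: "\<forall>t. F (\<lambda>k. p k + t * v k) = poly P t" using polyfun_line[OF Fp, of p v] by blast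
  have RP: "poly R s = s^3 * poly P (inverse s)" if "s \<noteq> 0" for s
  proof -
    have "(\<lambda>k. v k + s * p k) = smul s (\<lambda>k. p k + inverse s * v k)"
      using that by (auto simp: smul_def fun_eq_iff field_simps)
    note eq = this
    have "poly R s = F (\<lambda>k. v k + s * p k)" using R by simp
    also have "\<dots> = F (smul s (\<lambda>k. p k + inverse s * v k))" using eq by simp
    also have "\<dots> = s^3 * F (\<lambda>k. p k + inverse s * v k)" using hom by blast
    also have "\<dots> = s^3 * poly P (inverse s)" using P by simp
    finally show ?thesis .
  qed
  have degP: "degree P \<le> 3" by (rule deg_reflect[of R]) (use RP in auto)
  define c0 c1 c2 c3 where "c0 = coeff P 0" "c1 = coeff P 1" "c2 = coeff P 2" "c3 = coeff P 3"
  have Pe: "poly P t = c0 + c1 * t + c2 * t^2 + c3 * t^3" for t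
    unfolding c0_c1_c2_c3_def by (rule cubic_poly_expand[OF degP])
  define D1 where "D1 t = (\<Sum>a<5. pdiff a F (\<lambda>k. p k + t * v k) * v a)" for t
  define D2 where "D2 t = (\<Sum>a<5. (\<Sum>b<5. pdiff b (pdiff a F) (\<lambda>k. p k + t * v k) * v b) * v a)" for t
  have d1: "((\<lambda>t. c0 + c1 * t + c2 * t^2 + c3 * t^3) has_field_derivative D1 t) (at t)" for t
  proof -
    have "((\<lambda>t. F (\<lambda>k. p k + t * v k)) has_field_derivative D1 t) (at t)"
      unfolding D1_def by (rule pdiff_line[OF Fp])
    then show ?thesis using P Pe by simp
  qed
  have d1': "((\<lambda>t. c0 + c1 * t + c2 * t^2 + c3 * t^3) has_field_derivative c1 + 2 * c2 * t + 3 * c3 * t^2) (at t)" for t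
    by (auto intro!: derivative_eq_intros simp: algebra_simps power2_eq_square)
  have D1e: "D1 t = c1 + 2 * c2 * t + 3 * c3 * t^2" for t using DERIV_unique[OF d1 d1'] .
  have d2: "(D1 has_field_derivative D2 t) (at t)" for t
    unfolding D1_def D2_def
    by (intro DERIV_sum DERIV_cmult_right pdiff_line pdiff_polyfun[OF Fp])
  have d2': "((\<lambda>t. c1 + 2 * c2 * t + 3 * c3 * t^2) has_field_derivative 2 * c2 + 6 * c3 * t) (at t)" for t
    by (auto intro!: derivative_eq_intros simp: algebra_simps power2_eq_square)
  have D1f: "D1 = (\<lambda>t. c1 + 2 * c2 * t + 3 * c3 * t^2)" using D1e by auto
  have D2e: "D2 t = 2 * c2 + 6 * c3 * t" for t using DERIV_unique[OF d2[unfolded D1f] d2'] .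
  have pp: "(\<lambda>k. p k + 0 * v k) = p" by auto
  have "D2 0 = (\<Sum>a<5. \<Sum>b<5. pdiff b (pdiff a F) p * v b * v a)"
    unfolding D2_def pp by (simp add: sum_distrib_right)
  then have "2 * c2 = (\<Sum>a<5. \<Sum>b<5. pdiff b (pdiff a F) p * v b * v a)" using D2e[of 0] by simp
  then have c2: "c2 = QF F p v" unfolding QF_def by (metis nonzero_mult_div_cancel_left zero_neq_numeral)
  have "D1 0 = 0" unfolding D1_def pp using sing by (auto intro!: sum.neutral)
  then have c1: "c1 = 0" using D1e[of 0] by simp
  have "c0 = poly P 0" using Pe[of 0] by simp
  also have "poly P 0 = F (\<lambda>k. p k + 0 * v k)" using P[rule_format, of 0] by simp
  finally have c0: "c0 = 0" using F0 pp by simp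
  have "R = [:c3, c2:]"
  proof (rule poly_eq_off0, intro allI impI)
    fix t :: complex assume t: "t \<noteq> 0"
    show "poly R t = poly [:c3, c2:] t" using RP[OF t] Pe[of "inverse t"] c0 c1 t
      by (simp add: field_simps power2_eq_square power3_eq_cube)
  qed
  moreover have "poly R 0 = F v" using R[rule_format, of 0] by simp
  ultimately have "c3 = F v" by simp
  then show ?thesis using R \<open>R = [:c3, c2:]\<close> c2 by (simp add: algebra_simps)
qed

definition qf :: "(nat \<Rightarrow> nat \<Rightarrow> complex) \<Rightarrow> (nat \<Rightarrow> complex) \<Rightarrow> complex" where
  "qf H v = (\<Sum>a<5. \<Sum>b<5. H a b * v b * v a)"

definition bf :: "(nat \<Rightarrow> nat \<Rightarrow> complex) \<Rightarrow> (nat \<Rightarrow> complex) \<Rightarrow> (nat \<Rightarrow> complex) \<Rightarrow> complex" where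
  "bf H x y = (\<Sum>a<5. \<Sum>b<5. H a b * (x b * y a + y b * x a))"

lemma qf_expand: "qf H (\<lambda>m. x m + t * y m) = qf H x + t * bf H x y + t^2 * qf H y"
  unfolding qf_def bf_def
  by (simp add: algebra_simps sum.distrib sum_distrib_left power2_eq_square)

lemma find_isotropic:
  fixes H :: "nat \<Rightarrow> nat \<Rightarrow> complex" and p :: "nat \<Rightarrow> complex"
  assumes pc: "p \<in> cspace 5" and pnz: "p \<noteq> (\<lambda>i. 0)"
    and ker: "\<And>v. v \<in> cspace 5 \<Longrightarrow> (\<forall>a<5. (\<Sum>b<5. H a b * v b) = 0) \<Longrightarrow> \<exists>c. v = smul c p"
  shows "\<exists>e\<in>cspace 5. qf H e = 0 \<and> (\<exists>a<5. (\<Sum>b<5. H a b * e b) \<noteq> 0)"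
proof -
  obtain k where k: "k < 5" "p k \<noteq> 0"
  proof -
    have "\<exists>k<5. p k \<noteq> 0"
    proof (rule ccontr)
      assume "\<not> ?thesis"
      then have "p = (\<lambda>i. 0)" using pc by (auto simp: cspace_def fun_eq_iff) (metis not_le)
      with pnz show False by simp
    qed
    then show ?thesis using that by blast
  qed
  define i0 :: nat where "i0 = (if k = 0 then 1 else 0)"
  define j0 :: nat where "j0 = (if k = 2 then 1 else 2)"
  have ij: "i0 < 5" "j0 < 5" "i0 \<noteq> k" "j0 \<noteq> k" "i0 \<noteq> j0" unfolding i0_def j0_def using k by auto
  have notmult: "\<not> (\<exists>c. v = smul c p)" if "v k = 0" "v m \<noteq> 0" for v m
  proof
    assume "\<exists>c. v = smul c p"
    then obtain c where c: "v = smul c p" by blast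
    then have "c * p k = 0" using that(1) by (simp add: smul_def)
    then have "c = 0" using k by simp
    then show False using c that(2) by (simp add: smul_def)
  qed
  have good: "\<exists>a<5. (\<Sum>b<5. H a b * v b) \<noteq> 0" if "v \<in> cspace 5" "v k = 0" "v m \<noteq> 0" for v m
    using ker[OF that(1)] notmult[OF that(2,3)] by blast
  define b where "b = (\<lambda>m. if m = j0 then (1::complex) else 0)"
  define a where "a = (\<lambda>m. if m = i0 then (1::complex) else 0)"
  have bc: "b \<in> cspace 5" "a \<in> cspace 5" using ij unfolding a_def b_def cspace_def by auto
  show ?thesis
  proof (cases "qf H b = 0")
    case True
    show ?thesis
      by (rule bexI[OF _ bc(1)]) (use True good[OF bc(1), of j0] ij in \<open>auto simp: b_def\<close>)
  next
    case False
    define B where "B = bf H a b"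
    define sq where "sq = csqrt (B^2 - 4 * qf H a * qf H b)"
    define t0 where "t0 = (- B + sq) / (2 * qf H b)"
    have sq2: "sq^2 = B^2 - 4 * qf H a * qf H b" unfolding sq_def by simp
    have root: "qf H a + t0 * B + t0^2 * qf H b = 0"
      unfolding t0_def using False sq2
      by (simp add: field_simps power2_eq_square) algebra
    define e where "e = (\<lambda>m. a m + t0 * b m)"
    have ec: "e \<in> cspace 5" using bc unfolding e_def cspace_def by auto
    have "qf H e = 0" unfolding e_def qf_expand using root B_def by simp
    moreover have "\<exists>a<5. (\<Sum>b<5. H a b * e b) \<noteq> 0"
      by (rule good[OF ec, of i0]) (use ij in \<open>auto simp: e_def a_def b_def\<close>)
    ultimately show ?thesis using ec by blast
  qed
qed

locale cyl =
  fixes F :: "(nat\<Rightarrow>complex)\<Rightarrow>complex" and p e c :: "nat\<Rightarrow>complex"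
    and Q :: "(nat\<Rightarrow>complex)\<Rightarrow>complex" and r s i j :: nat
  assumes F_poly: "F \<in> polyfun 5"
  and F_hom: "\<And>c x. F (smul c x) = c^3 * F x"
  and Q_poly: "Q \<in> polyfun 5"
  and Q_hom: "\<And>c x. Q (smul c x) = c^2 * Q x"
  and FQ: "\<And>v s. F (\<lambda>k. v k + s * p k) = s * Q v + F v"
  and QE: "\<And>v t. Q (\<lambda>k. v k + t * e k) = Q v + t * (\<Sum>m<5. c m * v m)"
  and pc: "p \<in> cspace 5" and ec: "e \<in> cspace 5"
  and idx: "r < 5" "s < 5" "i < 5" "j < 5" "r \<noteq> s" "r \<noteq> i" "r \<noteq> j" "s \<noteq> i" "s \<noteq> j" "i \<noteq> j"
  and Dnz: "p r * e s - p s * e r \<noteq> 0"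
  and ci: "c i \<noteq> 0"
  and lp: "(\<Sum>m<5. c m * p m) = 0" and le: "(\<Sum>m<5. c m * e m) = 0"
begin

definition "ell x = (\<Sum>m<5. c m * x m)"
definition "Dt = p r * e s - p s * e r"
definition "Al x = (x r * e s - x s * e r) / Dt"
definition "Ga x = (p r * x s - p s * x r) / Dt"
definition "prj x = (\<lambda>k. x k - Al x * p k - Ga x * e k)"

lemma ell_comb: "ell (\<lambda>k. a * x k + b * y k) = a * ell x + b * ell y"
  unfolding ell_def by (simp add: algebra_simps sum.distrib sum_distrib_left)

lemma ell_prj: "ell (prj x) = ell x"
proof -
  have "ell (prj x) = ell x - Al x * (\<Sum>m<5. c m * p m) - Ga x * (\<Sum>m<5. c m * e m)"
    unfolding ell_def prj_def by (simp add: algebra_simps sum_subtractf sum_distrib_left sum.distrib)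
  then show ?thesis using lp le by simp
qed

lemma Q_p: "Q (\<lambda>k. v k + a * p k) = Q v"
proof -
  have "F (\<lambda>k. v k + (a + 1) * p k) = (a + 1) * Q v + F v" by (rule FQ)
  moreover have "(\<lambda>k. v k + (a + 1) * p k) = (\<lambda>k. (\<lambda>k. v k + a * p k) k + 1 * p k)" by (auto simp: algebra_simps)
  ultimately have "(a + 1) * Q v + F v = 1 * Q (\<lambda>k. v k + a * p k) + F (\<lambda>k. v k + a * p k)" using FQ by metis
  then show ?thesis using FQ[of v a] by (simp add: algebra_simps)
qed

lemma Dt_nz: "Dt \<noteq> 0" using Dnz unfolding Dt_def .

lemma prj_r: "prj x r = 0" and prj_s: "prj x s = 0"
  unfolding prj_def Al_def Ga_def using Dt_nz by (simp_all add: field_simps Dt_def)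

lemma decomp: "x = (\<lambda>k. (\<lambda>k. prj x k + Ga x * e k) k + Al x * p k)"
  unfolding prj_def by auto

lemma Q_decomp: "Q x = Q (prj x) + Ga x * ell x"
proof -
  have "Q x = Q (\<lambda>k. prj x k + Ga x * e k + Al x * p k)" by (rule arg_cong[where f=Q]) (auto simp: prj_def)
  also have "\<dots> = Q (\<lambda>k. prj x k + Ga x * e k)" using Q_p[of "\<lambda>k. prj x k + Ga x * e k" "Al x"] by simp
  also have "\<dots> = Q (prj x) + Ga x * ell x" using QE ell_prj unfolding ell_def by simp
  finally show ?thesis .
qed

lemma F_decomp: "F x = Al x * Q x + F (\<lambda>k. prj x k + Ga x * e k)"
proof -
  have "F x = F (\<lambda>k. prj x k + Ga x * e k + Al x * p k)" by (rule arg_cong[where f=F]) (auto simp: prj_def)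
  also have "\<dots> = Al x * Q (\<lambda>k. prj x k + Ga x * e k) + F (\<lambda>k. prj x k + Ga x * e k)"
    using FQ[of "\<lambda>k. prj x k + Ga x * e k" "Al x"] by simp
  also have "Q (\<lambda>k. prj x k + Ga x * e k) = Q x"
  proof -
    have "Q x = Q (\<lambda>k. prj x k + Ga x * e k + Al x * p k)" by (rule arg_cong[where f=Q]) (auto simp: prj_def)
    also have "\<dots> = Q (\<lambda>k. prj x k + Ga x * e k)" using Q_p[of "\<lambda>k. prj x k + Ga x * e k" "Al x"] by simp
    finally show ?thesis by simp
  qed
  finally show ?thesis .
qed

end

context cyl begin

definition "U = {x \<in> proj_space 4. ell x \<noteq> 0 \<and> Q x \<noteq> 0 \<and> F x \<noteq> 0}"
definition "Zs = {y \<in> cspace 7. y (2+r) = 0 \<and> y (2+s) = 0 \<and> y (2+i) = 0 \<and> y (2+j) = 0 \<and> y 0 * y 1 \<noteq> 0}"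
definition "phi x = (\<lambda>k. if k = 0 then Q x / ell x ^ 2 else if k = 1 then F x / ell x ^ 3
   else if k < 7 \<and> k - 2 \<noteq> r \<and> k - 2 \<noteq> s \<and> k - 2 \<noteq> i \<and> k - 2 \<noteq> j then prj x (k - 2) / ell x
   else if k = 7 then prj x j / ell x else 0)"
definition "vb y = (\<lambda>t. if t < 5 \<and> t \<noteq> i then (if t = j then y 7 else y (2 + t)) else 0)"
definition "vv y = (\<lambda>t. if t = i then (1 - ell (vb y)) / c i else vb y t)"
definition "xt y = (\<lambda>k. vv y k + (y 0 - Q (vv y)) * e k)"
definition "al y = (y 1 - F (xt y)) / y 0"
definition "psi y = (\<lambda>k. xt y k + al y * p k)"

lemma cyl_eq: "cylinder_over 7 Zs = {y \<in> cspace 8. y (2+r) = 0 \<and> y (2+s) = 0 \<and> y (2+i) = 0 \<and> y (2+j) = 0 \<and> y 0 * y 1 \<noteq> 0}"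
proof (rule set_eqI, rule iffI)
  fix y assume "y \<in> cylinder_over 7 Zs"
  then obtain z t where y: "y = z(7 := t)" "z \<in> Zs" unfolding cylinder_over_def by blast
  then show "y \<in> {y \<in> cspace 8. y (2+r) = 0 \<and> y (2+s) = 0 \<and> y (2+i) = 0 \<and> y (2+j) = 0 \<and> y 0 * y 1 \<noteq> 0}"
    using idx unfolding Zs_def cspace_def by auto
next
  fix y assume y: "y \<in> {y \<in> cspace 8. y (2+r) = 0 \<and> y (2+s) = 0 \<and> y (2+i) = 0 \<and> y (2+j) = 0 \<and> y 0 * y 1 \<noteq> 0}"
  have "y(7 := 0) \<in> Zs" using y idx unfolding Zs_def cspace_def by auto
  moreover have "y = (y(7 := 0))(7 := y 7)" by simp
  ultimately show "y \<in> cylinder_over 7 Zs" unfolding cylinder_over_def by blast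
qed

lemma vv_alt: "vv y = (\<lambda>t. vb y t + (if t = i then (1 - ell (vb y)) / c i else 0))"
  unfolding vv_def vb_def by auto

lemma ell_vv: "ell (vv y) = 1"
proof -
  have "ell (vv y) = ell (vb y) + (\<Sum>m<5. c m * (if m = i then (1 - ell (vb y)) / c i else 0))"
    unfolding vv_alt ell_def by (simp add: algebra_simps sum.distrib)
  also have "(\<Sum>m<5. c m * (if m = i then (1 - ell (vb y)) / c i else 0)) = c i * ((1 - ell (vb y)) / c i)"
    using idx by (simp add: if_distrib cong: if_cong)
  finally show ?thesis using ci by simp
qed

lemma ell_e: "ell e = 0" and ell_p: "ell p = 0" using le lp unfolding ell_def by auto

lemma ell_add: "ell (\<lambda>k. x k + a * y k) = ell x + a * ell y"
  unfolding ell_def by (simp add: algebra_simps sum.distrib sum_distrib_left)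

lemma ell_xt: "ell (xt y) = 1" unfolding xt_def ell_add ell_vv ell_e by simp

lemma Q_xt: "Q (xt y) = y 0" unfolding xt_def QE using ell_vv unfolding ell_def by simp

lemma psi_F: "y 0 \<noteq> 0 \<Longrightarrow> F (psi y) = y 1"
  unfolding psi_def FQ Q_xt al_def by simp

lemma psi_Q: "Q (psi y) = y 0" unfolding psi_def Q_p Q_xt ..

lemma psi_ell: "ell (psi y) = 1" unfolding psi_def ell_add ell_xt ell_p by simp

lemma vv_cs: "vv y \<in> cspace 5" using idx unfolding cspace_def vv_def vb_def by auto

lemma psi_cs: "psi y \<in> cspace 5"
  using vv_cs pc ec unfolding cspace_def psi_def xt_def by auto

lemma vv_rs: assumes "y \<in> cylinder_over 7 Zs" shows "vv y r = 0" "vv y s = 0"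
  using assms idx unfolding cyl_eq vv_def vb_def by auto

lemma prj_psi: assumes "y \<in> cylinder_over 7 Zs" shows "prj (psi y) = vv y"
proof -
  note rs = vv_rs[OF assms]
  define g where "g = y 0 - Q (vv y)"
  have pr: "psi y r = g * e r + al y * p r" "psi y s = g * e s + al y * p s"
    unfolding psi_def xt_def g_def using rs by auto
  have A: "Al (psi y) = al y" unfolding Al_def pr using Dt_nz by (simp add: Dt_def field_simps; simp add: algebra_simps)
  have G: "Ga (psi y) = g" unfolding Ga_def pr using Dt_nz by (simp add: Dt_def field_simps; simp add: algebra_simps)
  show ?thesis unfolding prj_def A G by (auto simp: psi_def xt_def g_def)
qed

lemma psi_U: assumes "y \<in> cylinder_over 7 Zs" shows "psi y \<in> U"
proof -
  have y0: "y 0 \<noteq> 0" "y 1 \<noteq> 0" using assms unfolding cyl_eq by auto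
  have "psi y \<noteq> (\<lambda>i. 0)"
  proof
    assume "psi y = (\<lambda>i. 0)"
    then have "ell (psi y) = 0" unfolding ell_def by simp
    then show False using psi_ell[of y] by simp
  qed
  then show ?thesis unfolding U_def proj_space_def using psi_cs psi_ell psi_Q psi_F y0 by auto
qed

lemma phi_psi: assumes y: "y \<in> cylinder_over 7 Zs" shows "phi (psi y) = y"
proof (rule ext)
  fix k
  have y0: "y 0 \<noteq> 0" using y unfolding cyl_eq by auto
  have yc: "y \<in> cspace 8" and yz: "y (2+r) = 0" "y (2+s) = 0" "y (2+i) = 0" "y (2+j) = 0" using y unfolding cyl_eq by auto
  note P = prj_psi[OF y] psi_ell psi_Q psi_F[of y, OF y0]
  consider "k = 0" | "k = 1" | "2 \<le> k \<and> k < 7 \<and> k - 2 \<noteq> r \<and> k - 2 \<noteq> s \<and> k - 2 \<noteq> i \<and> k - 2 \<noteq> j"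
    | "2 \<le> k \<and> k < 7 \<and> (k - 2 = r \<or> k - 2 = s \<or> k - 2 = i \<or> k - 2 = j)" | "k = 7" | "k \<ge> 8" by linarith
  then show "phi (psi y) k = y k"
  proof cases
    case 1 then show ?thesis unfolding phi_def P by simp
  next
    case 2 then show ?thesis unfolding phi_def P by simp
  next
    case 3
    then have "k = 2 + (k - 2)" "k - 2 < 5" by auto
    then show ?thesis using 3 unfolding phi_def P vv_def vb_def by auto
  next
    case 4
    then have "k = 2 + r \<or> k = 2 + s \<or> k = 2 + i \<or> k = 2 + j" by auto
    then have "y k = 0" using yz by auto
    then show ?thesis using 4 unfolding phi_def by auto
  next
    case 5 then show ?thesis unfolding phi_def P vv_def vb_def using idx by auto
  next
    case 6 then show ?thesis using yc unfolding phi_def cspace_def by auto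
  qed
qed

end

context cyl begin

lemma prj_cs: "x \<in> cspace 5 \<Longrightarrow> prj x \<in> cspace 5"
  using pc ec unfolding cspace_def prj_def by auto

lemma phi_cyl: assumes x: "x \<in> U" shows "phi x \<in> cylinder_over 7 Zs"
proof -
  have L: "ell x \<noteq> 0" "Q x \<noteq> 0" "F x \<noteq> 0" using x unfolding U_def by auto
  have "phi x \<in> cspace 8" unfolding phi_def cspace_def by auto
  moreover have "phi x (2+r) = 0" "phi x (2+s) = 0" "phi x (2+i) = 0" "phi x (2+j) = 0"
    using idx unfolding phi_def by auto
  moreover have "phi x 0 * phi x 1 \<noteq> 0" using L unfolding phi_def by simp
  ultimately show ?thesis unfolding cyl_eq by blast
qed

lemma psi_phi: assumes x: "x \<in> U" shows "psi (phi x) = smul (1 / ell x) x"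
proof -
  have L: "ell x \<noteq> 0" "Q x \<noteq> 0" "F x \<noteq> 0" using x unfolding U_def by auto
  have xc: "x \<in> cspace 5" using x unfolding U_def proj_space_def by auto
  define l where "l = ell x"
  define y where "y = phi x"
  have vb: "vb y = (\<lambda>t. if t < 5 \<and> t \<noteq> i then prj x t / l else 0)"
  proof (rule ext)
    fix t
    consider "t < 5 \<and> t \<noteq> i \<and> t = j" | "t < 5 \<and> t \<noteq> i \<and> t \<noteq> j \<and> (t = r \<or> t = s)"
      | "t < 5 \<and> t \<noteq> i \<and> t \<noteq> j \<and> t \<noteq> r \<and> t \<noteq> s" | "\<not> (t < 5 \<and> t \<noteq> i)" by blast
    then show "vb y t = (if t < 5 \<and> t \<noteq> i then prj x t / l else 0)"
    proof cases
      case 1 then show ?thesis unfolding vb_def y_def phi_def l_def using idx by auto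
    next
      case 2 then show ?thesis unfolding vb_def y_def phi_def l_def using idx prj_r prj_s by auto
    next
      case 3 then show ?thesis unfolding vb_def y_def phi_def l_def using idx by auto
    qed (auto simp: vb_def)
  qed
  have ellvb: "ell (vb y) = (l - c i * prj x i) / l"
  proof -
    have "ell (vb y) = (\<Sum>m<5. (if m \<noteq> i then c m * prj x m / l else 0))"
      unfolding vb ell_def by (intro sum.cong) auto
    also have "\<dots> = (\<Sum>m<5. c m * prj x m / l) - c i * prj x i / l"
    proof -
      have "(\<Sum>m<5. (if m \<noteq> i then c m * prj x m / l else 0)) = (\<Sum>m<5. c m * prj x m / l - (if m = i then c m * prj x m / l else 0))"
        by (intro sum.cong) auto
      also have "\<dots> = (\<Sum>m<5. c m * prj x m / l) - c i * prj x i / l"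
        using idx by (simp add: sum_subtractf)
      finally show ?thesis .
    qed
    also have "(\<Sum>m<5. c m * prj x m / l) = ell (prj x) / l" unfolding ell_def by (simp add: sum_divide_distrib)
    finally show ?thesis unfolding ell_prj l_def using L by (simp add: field_simps)
  qed
  have vv: "vv y = smul (1 / l) (prj x)"
  proof (rule ext)
    fix t
    show "vv y t = smul (1 / l) (prj x) t"
    proof (cases "t = i")
      case True then show ?thesis unfolding vv_def ellvb smul_def l_def using L ci by (simp add: field_simps)
    next
      case False
      then show ?thesis using prj_cs[OF xc] unfolding vv_def vb smul_def cspace_def by auto
    qed
  qed
  have Qvv: "Q (vv y) = Q (prj x) / l^2" unfolding vv Q_hom by (simp add: field_simps)
  have y0: "y 0 = Q x / l^2" and y1: "y 1 = F x / l^3" unfolding y_def phi_def l_def by auto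
  have g: "y 0 - Q (vv y) = Ga x / l" unfolding Qvv y0 using Q_decomp[of x] L
    by (simp add: l_def field_simps power2_eq_square)
  define w where "w = (\<lambda>k. prj x k + Ga x * e k)"
  have "xt y = (\<lambda>k. vv y k + Ga x / l * e k)" unfolding xt_def g ..
  then have xt: "xt y = smul (1 / l) w" unfolding vv w_def smul_def by (auto simp: fun_eq_iff add_divide_distrib)
  have Fxt: "F (xt y) = F w / l^3" unfolding xt F_hom by (simp add: field_simps)
  have al: "al y = Al x / l" unfolding al_def Fxt y0 y1 using F_decomp[of x] L
    by (simp add: w_def l_def field_simps power2_eq_square power3_eq_cube)
  have "psi y = smul (1 / l) x"
  proof (rule ext)
    fix k
    show "psi y k = smul (1 / l) x k"
    proof -
      have xk: "x k = w k + Al x * p k" using fun_cong[OF decomp[of x], of k] by (simp add: w_def)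
      show ?thesis unfolding psi_def xt al smul_def xk using L by (simp add: l_def field_simps)
    qed
  qed
  then show ?thesis unfolding y_def l_def .
qed

end

lemma polyfun_cdiv: "f \<in> polyfun n \<Longrightarrow> (\<lambda>x. f x / d) \<in> polyfun n"
  using polyfun_cmul[of f n "inverse d"] by (simp add: field_simps)

lemma hom_mult: "homogeneous_of_degree n d1 f \<Longrightarrow> homogeneous_of_degree n d2 g \<Longrightarrow>
   homogeneous_of_degree n (d1 + d2) (\<lambda>x. f x * g x)"
  unfolding homogeneous_of_degree_def by (auto intro: polyfun.pf_mult simp: power_add)

lemma hom_pow: "homogeneous_of_degree n d f \<Longrightarrow> homogeneous_of_degree n (d * k) (\<lambda>x. f x ^ k)"
  unfolding homogeneous_of_degree_def by (auto intro: polyfun_pow simp: power_mult_distrib power_mult)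

lemma hom_const: "homogeneous_of_degree n 0 (\<lambda>x. c)"
  unfolding homogeneous_of_degree_def by (auto intro: polyfun.pf_const)

context cyl begin

lemma ell_fun: "ell = (\<lambda>x. \<Sum>m<5. c m * x m)" by (rule ext) (simp add: ell_def)

lemma ell_poly: "ell \<in> polyfun 5"
  unfolding ell_fun by (intro polyfun_sum polyfun_cmul polyfun.pf_var) auto

lemma ell_hom: "homogeneous_of_degree 5 1 ell"
  unfolding homogeneous_of_degree_def using ell_poly
  by (auto simp: ell_def smul_def sum_distrib_left algebra_simps)

lemma prj_poly: "t < 5 \<Longrightarrow> (\<lambda>x. prj x t) \<in> polyfun 5"
  unfolding prj_def Al_def Ga_def using idx
  by (intro polyfun_sub polyfun.pf_mult polyfun_cdiv polyfun.pf_var polyfun.pf_const) auto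

lemma prj_hom: "t < 5 \<Longrightarrow> homogeneous_of_degree 5 1 (\<lambda>x. prj x t)"
  unfolding homogeneous_of_degree_def using prj_poly
  by (auto simp: prj_def Al_def Ga_def smul_def field_simps)

lemma Q_homd: "homogeneous_of_degree 5 2 Q" unfolding homogeneous_of_degree_def using Q_poly Q_hom by auto
lemma F_homd: "homogeneous_of_degree 5 3 F" unfolding homogeneous_of_degree_def using F_poly F_hom by auto

lemma U_open: "proj_open 4 U"
proof -
  have h: "homogeneous_of_degree 5 (1 + 2 + 3) (\<lambda>x. ell x * Q x * F x)"
    by (intro hom_mult ell_hom Q_homd F_homd)
  have "proj_space 4 - U = {x \<in> proj_space 4. \<forall>g\<in>{\<lambda>x. ell x * Q x * F x}. g x = 0}"
    unfolding U_def by auto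
  then have "proj_closed 4 (proj_space 4 - U)" unfolding proj_closed_def using h
    by (intro exI[of _ "{\<lambda>x. ell x * Q x * F x}"]) auto
  then show ?thesis unfolding proj_open_def U_def by auto
qed

lemma reg_frac: assumes "homogeneous_of_degree 5 d a" "homogeneous_of_degree 5 d b"
  "\<And>y. y \<in> U \<Longrightarrow> b y \<noteq> 0 \<and> f y = a y / b y"
  shows "regular_on_proj 4 U f"
  unfolding regular_on_proj_def using assms U_open by (intro ballI exI[of _ a] exI[of _ b] exI[of _ d] exI[of _ U]) auto

lemma phi_morph: "morphism_proj_to_aff 4 U (Suc 7) phi"
  unfolding morphism_proj_to_aff_def
proof (intro conjI ballI allI impI)
  fix x assume "x \<in> U" then show "phi x \<in> cspace (Suc 7)" unfolding phi_def cspace_def by auto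
next
  fix k assume k: "k < Suc 7"
  have lnz: "\<And>y. y \<in> U \<Longrightarrow> ell y \<noteq> 0" unfolding U_def by auto
  consider "k = 0" | "k = 1" | "2 \<le> k \<and> k < 7 \<and> k - 2 \<noteq> r \<and> k - 2 \<noteq> s \<and> k - 2 \<noteq> i \<and> k - 2 \<noteq> j"
    | "2 \<le> k \<and> k < 7 \<and> \<not> (k - 2 \<noteq> r \<and> k - 2 \<noteq> s \<and> k - 2 \<noteq> i \<and> k - 2 \<noteq> j)" | "k = 7" using k by linarith
  then show "regular_on_proj 4 U (\<lambda>x. phi x k)"
  proof cases
    case 1
    show ?thesis
      by (rule reg_frac[OF Q_homd, of "\<lambda>x. ell x ^ 2"]) (use hom_pow[OF ell_hom, of 2] lnz 1 in \<open>auto simp: phi_def\<close>)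
  next
    case 2
    show ?thesis
      by (rule reg_frac[OF F_homd, of "\<lambda>x. ell x ^ 3"]) (use hom_pow[OF ell_hom, of 3] lnz 2 in \<open>auto simp: phi_def\<close>)
  next
    case 3
    show ?thesis
      by (rule reg_frac[OF prj_hom[of "k - 2"] ell_hom]) (use lnz 3 in \<open>auto simp: phi_def\<close>)
  next
    case 4
    show ?thesis
      by (rule reg_frac[OF hom_const[of 5 0] hom_const[of 5 1]]) (use 4 in \<open>auto simp: phi_def\<close>)
  next
    case 5
    show ?thesis
      by (rule reg_frac[OF prj_hom[of j] ell_hom]) (use lnz 5 idx in \<open>auto simp: phi_def\<close>)
  qed
qed

lemma vb_poly: "(\<lambda>y. vb y t) \<in> polyfun 8"
  unfolding vb_def by (cases "t < 5 \<and> t \<noteq> i"; cases "t = j") (auto intro: polyfun.intros)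

lemma vv_poly: "(\<lambda>y. vv y t) \<in> polyfun 8"
proof (cases "t = i")
  case True
  have "(\<lambda>y. ell (vb y)) \<in> polyfun 8" unfolding ell_def
    by (intro polyfun_sum polyfun_cmul vb_poly) auto
  then show ?thesis unfolding vv_def using True
    by (auto intro!: polyfun_cdiv polyfun_sub polyfun.pf_const)
next
  case False then show ?thesis unfolding vv_def using vb_poly by simp
qed

lemma xt_poly: "(\<lambda>y. xt y k) \<in> polyfun 8"
proof -
  have "(\<lambda>y. Q (vv y)) \<in> polyfun 8" by (rule polyfun_subst[OF Q_poly vv_poly])
  then show ?thesis unfolding xt_def
    by (intro polyfun.pf_add vv_poly polyfun.pf_mult polyfun_sub polyfun.pf_const) (auto intro: polyfun.pf_var)
qed

definition "hh t y = (y 1 - F (xt y)) * p t + y 0 * xt y t"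

lemma hh_poly: "hh t \<in> polyfun (Suc 7)"
proof -
  have "(\<lambda>y. F (xt y)) \<in> polyfun 8" by (rule polyfun_subst[OF F_poly xt_poly])
  then have "(\<lambda>y. (y 1 - F (xt y)) * p t + y 0 * xt y t) \<in> polyfun 8"
    by (intro polyfun.pf_add polyfun.pf_mult polyfun_sub polyfun.pf_const xt_poly) (auto intro: polyfun.pf_var)
  then show ?thesis unfolding hh_def[abs_def] by simp
qed

lemma psi_morph: "morphism_aff_to_proj (Suc 7) (cylinder_over 7 Zs) 4 psi"
  unfolding morphism_aff_to_proj_def
proof (intro ballI)
  fix z assume z: "z \<in> cylinder_over 7 Zs"
  define V where "V = {y \<in> cspace (Suc 7). y 0 \<noteq> 0}"
  have "aff_open (Suc 7) V"
  proof -
    have "cspace (Suc 7) - V = {y \<in> cspace (Suc 7). \<forall>g\<in>{\<lambda>y. y 0}. g y = 0}" unfolding V_def by auto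
    moreover have "{\<lambda>y. y 0} \<subseteq> polyfun (Suc 7)" by (auto intro: polyfun.pf_var)
    ultimately show ?thesis unfolding aff_open_def aff_closed_def V_def by blast
  qed
  moreover have "z \<in> V" using z unfolding V_def cyl_eq by auto
  moreover have "\<forall>y\<in>cylinder_over 7 Zs \<inter> V. (\<exists>t\<le>4. hh t y \<noteq> 0) \<and>
       (\<exists>c. c \<noteq> 0 \<and> psi y = smul c (\<lambda>t. if t \<le> 4 then hh t y else 0))"
  proof
    fix y assume y: "y \<in> cylinder_over 7 Zs \<inter> V"
    then have y0: "y 0 \<noteq> 0" unfolding V_def by auto
    have hk: "hh t y = y 0 * psi y t" for t unfolding hh_def psi_def al_def using y0 by (simp add: field_simps)
    have "psi y \<noteq> (\<lambda>i. 0)"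
    proof
      assume "psi y = (\<lambda>i. 0)"
      then have "ell (psi y) = 0" unfolding ell_def by simp
      then show False using psi_ell[of y] by simp
    qed
    then obtain t where t: "psi y t \<noteq> 0" by auto
    have "\<not> 5 \<le> t" using psi_cs[of y] t unfolding cspace_def by auto
    then have "t \<le> 4" by simp
    then have ex: "\<exists>t\<le>4. hh t y \<noteq> 0" using t y0 hk by auto
    have "psi y = smul (1 / y 0) (\<lambda>t. if t \<le> 4 then hh t y else 0)"
    proof (rule ext)
      fix k
      show "psi y k = smul (1 / y 0) (\<lambda>t. if t \<le> 4 then hh t y else 0) k"
      proof (cases "k \<le> 4")
        case True then show ?thesis unfolding smul_def hk using y0 by simp
      next
        case False then show ?thesis using psi_cs[of y] unfolding smul_def cspace_def by auto
      qed
    qed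
    then show "(\<exists>t\<le>4. hh t y \<noteq> 0) \<and> (\<exists>c. c \<noteq> 0 \<and> psi y = smul c (\<lambda>t. if t \<le> 4 then hh t y else 0))"
      using ex y0 by (intro conjI exI[of _ "1 / y 0"]) auto
  qed
  moreover have "\<forall>t\<le>4. hh t \<in> polyfun (Suc 7)" using hh_poly by blast
  ultimately show "\<exists>V h. aff_open (Suc 7) V \<and> z \<in> V \<and> (\<forall>i\<le>4. h i \<in> polyfun (Suc 7)) \<and>
          (\<forall>y\<in>cylinder_over 7 Zs \<inter> V. (\<exists>i\<le>4. h i y \<noteq> 0) \<and>
              (\<exists>c. c \<noteq> 0 \<and> psi y = smul c (\<lambda>i. if i \<le> 4 then h i y else 0)))"
    by blast
qed

end

lemma irred_lemma:
  assumes Zdef: "Z = {y \<in> cspace m. P y \<and> h y \<noteq> 0}" and hpoly: "h \<in> polyfun m"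
    and Pline: "\<And>y z t. y \<in> cspace m \<Longrightarrow> z \<in> cspace m \<Longrightarrow> P y \<Longrightarrow> P z \<Longrightarrow> P (\<lambda>k. y k + t * (z k - y k))"
  shows "\<forall>C1 C2. aff_closed m C1 \<and> aff_closed m C2 \<and> Z \<subseteq> C1 \<union> C2 \<longrightarrow> Z \<subseteq> C1 \<or> Z \<subseteq> C2"
proof (intro allI impI)
  fix C1 C2 assume H: "aff_closed m C1 \<and> aff_closed m C2 \<and> Z \<subseteq> C1 \<union> C2"
  show "Z \<subseteq> C1 \<or> Z \<subseteq> C2"
  proof (rule ccontr)
    assume "\<not> (Z \<subseteq> C1 \<or> Z \<subseteq> C2)"
    then obtain z1 z2 where z1: "z1 \<in> Z" "z1 \<notin> C1" and z2: "z2 \<in> Z" "z2 \<notin> C2" by blast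
    obtain G1 where G1: "G1 \<subseteq> polyfun m" "C1 = {x \<in> cspace m. \<forall>g\<in>G1. g x = 0}" using H unfolding aff_closed_def by blast
    obtain G2 where G2: "G2 \<subseteq> polyfun m" "C2 = {x \<in> cspace m. \<forall>g\<in>G2. g x = 0}" using H unfolding aff_closed_def by blast
    have zc: "z1 \<in> cspace m" "z2 \<in> cspace m" "P z1" "P z2" "h z1 \<noteq> 0" using z1 z2 Zdef by auto
    obtain g1 where g1: "g1 \<in> G1" "g1 z1 \<noteq> 0" using z1 G1 zc by auto
    obtain g2 where g2: "g2 \<in> G2" "g2 z2 \<noteq> 0" using z2 G2 zc by auto
    define L where "L t = (\<lambda>k. z1 k + t * (z2 k - z1 k))" for t
    have L0: "L 0 = z1" and L1: "L 1 = z2" unfolding L_def by auto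
    obtain P1 where P1: "\<forall>t. g1 (L t) = poly P1 t" using polyfun_line[of g1 m z1 "\<lambda>k. z2 k - z1 k"] g1 G1 unfolding L_def by auto
    obtain P2 where P2: "\<forall>t. g2 (L t) = poly P2 t" using polyfun_line[of g2 m z1 "\<lambda>k. z2 k - z1 k"] g2 G2 unfolding L_def by auto
    obtain P3 where P3: "\<forall>t. h (L t) = poly P3 t" using polyfun_line[OF hpoly, of z1 "\<lambda>k. z2 k - z1 k"] unfolding L_def by auto
    have "P1 \<noteq> 0" using P1 g1 L0 by (metis poly_0)
    moreover have "P2 \<noteq> 0" using P2 g2 L1 by (metis poly_0)
    moreover have "P3 \<noteq> 0" using P3 zc L0 by (metis poly_0)
    ultimately have "P1 * P2 * P3 \<noteq> 0" by simp
    then have "finite {t. poly (P1 * P2 * P3) t = 0}" by (rule poly_roots_finite)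
    then obtain t where "t \<notin> {t. poly (P1 * P2 * P3) t = 0}"
      using ex_new_if_finite[OF infinite_UNIV_char_0] by blast
    then have t: "poly (P1 * P2 * P3) t \<noteq> 0" by simp
    have Lc: "L t \<in> cspace m" using zc unfolding L_def cspace_def by auto
    have "L t \<in> Z" using Lc Pline[OF zc(1,2,3,4)] t P3 unfolding Zdef L_def by auto
    then have "L t \<in> C1 \<or> L t \<in> C2" using H by auto
    then show False
    proof
      assume "L t \<in> C1" then have "g1 (L t) = 0" using G1 g1 by auto
      then show False using t P1 by simp
    next
      assume "L t \<in> C2" then have "g2 (L t) = 0" using G2 g2 by auto
      then show False using t P2 by simp
    qed
  qed
qed

context cyl begin

lemma Zs_qav: "quasi_affine_variety 7 Zs"
  unfolding quasi_affine_variety_def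
proof (intro conjI)
  define A where "A = {y \<in> cspace 7. \<forall>g\<in>{\<lambda>y. y (2+r), \<lambda>y. y (2+s), \<lambda>y. y (2+i), \<lambda>y. y (2+j)}. g y = 0}"
  define V where "V = {y \<in> cspace 7. y 0 * y 1 \<noteq> 0}"
  have "aff_closed 7 A" unfolding aff_closed_def A_def using idx
    by (intro exI[of _ "{\<lambda>y. y (2+r), \<lambda>y. y (2+s), \<lambda>y. y (2+i), \<lambda>y. y (2+j)}"]) (auto intro: polyfun.pf_var)
  moreover have "aff_open 7 V"
  proof -
    have "cspace 7 - V = {y \<in> cspace 7. \<forall>g\<in>{\<lambda>y. y 0 * y 1}. g y = 0}" unfolding V_def by auto
    moreover have "{\<lambda>y. y 0 * y 1} \<subseteq> polyfun 7" by (auto intro!: polyfun.intros)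
    ultimately show ?thesis unfolding aff_open_def aff_closed_def V_def by blast
  qed
  moreover have "Zs = A \<inter> V" unfolding Zs_def A_def V_def by auto
  ultimately show "\<exists>A V. aff_closed 7 A \<and> aff_open 7 V \<and> Zs = A \<inter> V" by blast
next
  have "(\<lambda>k. if k < 2 then 1 else 0) \<in> Zs" unfolding Zs_def cspace_def by auto
  then show "Zs \<noteq> {}" by auto
next
  show "\<forall>C1 C2. aff_closed 7 C1 \<and> aff_closed 7 C2 \<and> Zs \<subseteq> C1 \<union> C2 \<longrightarrow> Zs \<subseteq> C1 \<or> Zs \<subseteq> C2"
    by (rule irred_lemma[of Zs 7 "\<lambda>y. y (2+r) = 0 \<and> y (2+s) = 0 \<and> y (2+i) = 0 \<and> y (2+j) = 0" "\<lambda>y. y 0 * y 1"])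
      (auto simp: Zs_def intro!: polyfun.intros)
qed

lemma main: "contains_cylinder 4 (proj_space 4 - {x. F x = 0})"
  unfolding contains_cylinder_def
proof (intro exI conjI)
  show "proj_open 4 U" by (rule U_open)
  show "U \<subseteq> proj_space 4 - {x. F x = 0}" unfolding U_def by auto
  show "quasi_affine_variety 7 Zs" by (rule Zs_qav)
  show "morphism_proj_to_aff 4 U (Suc 7) phi" by (rule phi_morph)
  show "morphism_aff_to_proj (Suc 7) (cylinder_over 7 Zs) 4 psi" by (rule psi_morph)
  show "\<forall>x\<in>U. phi x \<in> cylinder_over 7 Zs" using phi_cyl by blast
  show "\<forall>y\<in>cylinder_over 7 Zs. psi y \<in> U" using psi_U by blast
  show "\<forall>x\<in>U. proj_eq x (psi (phi x))"
  proof
    fix x assume x: "x \<in> U"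
    then have "ell x \<noteq> 0" unfolding U_def by auto
    then show "proj_eq x (psi (phi x))" unfolding proj_eq_def psi_phi[OF x] by (intro exI[of _ "1 / ell x"]) auto
  qed
  show "\<forall>y\<in>cylinder_over 7 Zs. phi (psi y) = y" using phi_psi by blast
qed

end

theorem proposition5p2:
  fixes F :: "(nat \<Rightarrow> complex) \<Rightarrow> complex" and p :: "nat \<Rightarrow> complex"
  assumes cubic: "homogeneous_of_degree 5 3 F"
    and nonzero: "\<exists>x. F x \<noteq> 0"
    and singular: "\<exists>q\<in>proj_space 4. F q = 0 \<and> (\<forall>i\<le>4. pdiff i F q = 0)"
    and odp: "ordinary_double_point 4 F p"
  shows "contains_cylinder 4 (proj_space 4 - {x. F x = 0})"
proof -
  have Fp: "F \<in> polyfun 5" and Fh: "\<And>c x. F (smul c x) = c^3 * F x" using cubic unfolding homogeneous_of_degree_def by auto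
  have pps: "p \<in> proj_space 4" and F0: "F p = 0" and sing: "\<forall>i\<le>4. pdiff i F p = 0"
    and kerset: "{v \<in> cspace (Suc 4). \<forall>i\<le>4. (\<Sum>j\<le>4. pdiff j (pdiff i F) p * v j) = 0} = {smul c p | c. True}"
    using odp unfolding ordinary_double_point_def by auto
  have pc: "p \<in> cspace 5" and pnz: "p \<noteq> (\<lambda>i. 0)" using pps unfolding proj_space_def by auto
  define H where "H a b = pdiff b (pdiff a F) p" for a b
  have Hsym: "H a b = H b a" for a b unfolding H_def using pdiff_swap[OF Fp] by metis
  have at: "{..4::nat} = {..<5}" by auto
  have ker: "\<exists>c. v = smul c p" if "v \<in> cspace 5" "\<forall>a<5. (\<Sum>b<5. H a b * v b) = 0" for v
  proof -
    have "v \<in> {v \<in> cspace (Suc 4). \<forall>i\<le>4. (\<Sum>j\<le>4. pdiff j (pdiff i F) p * v j) = 0}"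
      using that unfolding at H_def by auto
    then show ?thesis unfolding kerset by auto
  qed
  have Hp: "(\<Sum>b<5. H a b * p b) = 0" if "a < 5" for a
  proof -
    have "p \<in> {smul c p | c. True}" by (intro CollectI exI[of _ 1]) (auto simp: smul_def)
    then have "p \<in> {v \<in> cspace (Suc 4). \<forall>i\<le>4. (\<Sum>j\<le>4. pdiff j (pdiff i F) p * v j) = 0}" unfolding kerset .
    then show ?thesis using that unfolding at H_def by auto
  qed
  obtain e where ec: "e \<in> cspace 5" and qe: "qf H e = 0" and He: "\<exists>a<5. (\<Sum>b<5. H a b * e b) \<noteq> 0"
    using find_isotropic[OF pc pnz ker] by blast
  define c where "c m = (\<Sum>b<5. H m b * e b)" for m
  define Q where "Q = QF F p"
  have Qq: "Q v = qf H v / 2" for v unfolding Q_def QF_def qf_def H_def ..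
  have FQ: "F (\<lambda>k. v k + s * p k) = s * Q v + F v" for v s
    unfolding Q_def by (rule core_expand[OF Fp _ F0 sing]) (use Fh in auto)
  have Qpoly: "Q \<in> polyfun 5"
  proof -
    have "(\<lambda>v. qf H v / 2) \<in> polyfun 5" unfolding qf_def
      by (intro polyfun_cdiv polyfun_sum polyfun.pf_mult polyfun.pf_const polyfun.pf_var) auto
    moreover have "Q = (\<lambda>v. qf H v / 2)" using Qq by auto
    ultimately show ?thesis by simp
  qed
  have Qhom: "Q (smul a x) = a^2 * Q x" for a x
    unfolding Qq qf_def smul_def by (simp add: sum_distrib_left sum_divide_distrib algebra_simps power2_eq_square)
  have bfe: "bf H v e = 2 * (\<Sum>m<5. c m * v m)" for v
  proof -
    have s1: "(\<Sum>a<5. \<Sum>b<5. H a b * (v b * e a)) = (\<Sum>b<5. \<Sum>a<5. H a b * (v b * e a))" by (rule sum.swap)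
    also have "\<dots> = (\<Sum>m<5. \<Sum>b<5. H m b * (e b * v m))" using Hsym by (simp add: mult_ac)
    finally have s1': "(\<Sum>a<5. \<Sum>b<5. H a b * (v b * e a)) = (\<Sum>m<5. \<Sum>b<5. H m b * (e b * v m))" .
    have "bf H v e = (\<Sum>a<5. \<Sum>b<5. H a b * (v b * e a)) + (\<Sum>a<5. \<Sum>b<5. H a b * (e b * v a))"
      unfolding bf_def by (simp add: algebra_simps sum.distrib)
    also have "\<dots> = 2 * (\<Sum>m<5. \<Sum>b<5. H m b * (e b * v m))" unfolding s1' by simp
    also have "(\<Sum>m<5. \<Sum>b<5. H m b * (e b * v m)) = (\<Sum>m<5. c m * v m)"
      unfolding c_def by (simp add: sum_distrib_right sum_distrib_left mult_ac)
    finally show ?thesis .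
  qed
  have QE: "Q (\<lambda>k. v k + t * e k) = Q v + t * (\<Sum>m<5. c m * v m)" for v t
    unfolding Qq qf_expand qe bfe by (simp add: field_simps)
  have lp: "(\<Sum>m<5. c m * p m) = 0"
  proof -
    have "(\<Sum>m<5. c m * p m) = (\<Sum>m<5. \<Sum>b<5. H m b * e b * p m)" unfolding c_def by (simp add: sum_distrib_right)
    also have "\<dots> = (\<Sum>b<5. \<Sum>m<5. H m b * e b * p m)" by (rule sum.swap)
    also have "\<dots> = (\<Sum>b<5. e b * (\<Sum>m<5. H b m * p m))" using Hsym by (simp add: sum_distrib_left mult_ac)
    also have "\<dots> = 0" using Hp by simp
    finally show ?thesis .
  qed
  have le: "(\<Sum>m<5. c m * e m) = 0"
  proof -
    have "(\<Sum>m<5. c m * e m) = qf H e" unfolding c_def qf_def by (simp add: sum_distrib_right)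
    then show ?thesis using qe by simp
  qed
  obtain k where k: "k < 5" "p k \<noteq> 0"
  proof -
    have "\<exists>k<5. p k \<noteq> 0"
    proof (rule ccontr)
      assume "\<not> ?thesis"
      then have "p = (\<lambda>i. 0)" using pc by (auto simp: cspace_def fun_eq_iff) (metis not_le)
      with pnz show False by simp
    qed
    then show ?thesis using that by blast
  qed
  obtain t where t: "t < 5" "p k * e t - p t * e k \<noteq> 0"
  proof -
    have "\<exists>t<5. p k * e t - p t * e k \<noteq> 0"
    proof (rule ccontr)
      assume "\<not> ?thesis"
      then have eq: "e m = (e k / p k) * p m" if "m < 5" for m using that k by (auto simp: field_simps)
      have "(\<Sum>b<5. H a b * e b) = 0" if "a < 5" for a
      proof -
        have "(\<Sum>b<5. H a b * e b) = (e k / p k) * (\<Sum>b<5. H a b * p b)"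
          by (simp add: sum_distrib_left eq mult_ac)
        then show ?thesis using Hp[OF that] by simp
      qed
      then show False using He by blast
    qed
    then show ?thesis using that by blast
  qed
  have rs: "k \<noteq> t" using t by auto
  obtain i where i: "i < 5" "i \<noteq> k" "i \<noteq> t" "c i \<noteq> 0"
  proof -
    have "\<exists>i<5. i \<noteq> k \<and> i \<noteq> t \<and> c i \<noteq> 0"
    proof (rule ccontr)
      assume "\<not> ?thesis"
      then have z: "c m = 0" if "m < 5" "m \<noteq> k" "m \<noteq> t" for m using that by blast
      have red: "(\<Sum>m<5. c m * x m) = c k * x k + c t * x t" for x
      proof -
        have "(\<Sum>m<5. c m * x m) = (\<Sum>m\<in>{k, t}. c m * x m)"
          by (rule sum.mono_neutral_right) (use k t z in auto)
        then show ?thesis using rs by simp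
      qed
      have e1: "c k * p k + c t * p t = 0" using lp red by simp
      have e2: "c k * e k + c t * e t = 0" using le red by simp
      have "c k * (p k * e t - p t * e k) = 0" using e1 e2 by algebra
      then have ck: "c k = 0" using t by simp
      have "c t * (p k * e t - p t * e k) = 0" using e1 e2 by algebra
      then have ct: "c t = 0" using t by simp
      have "c a = 0" if "a < 5" for a using z[OF that] ck ct by (cases "a = k"; cases "a = t") auto
      then show False using He unfolding c_def by blast
    qed
    then show ?thesis using that by blast
  qed
  obtain j where j: "j < 5" "j \<noteq> k" "j \<noteq> t" "j \<noteq> i"
  proof -
    have "\<exists>j<5. j \<noteq> k \<and> j \<noteq> t \<and> j \<noteq> i"
    proof (rule ccontr)
      assume "\<not> ?thesis"
      then have "{..<5} \<subseteq> {k, t, i}" by auto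
      then have "card {..<5::nat} \<le> card {k, t, i}" by (intro card_mono) auto
      also have "\<dots> \<le> 3" by (simp add: card_insert_if)
      finally show False by simp
    qed
    then show ?thesis using that by blast
  qed
  interpret cyl F p e c Q k t i j
    by unfold_locales (use Fp Fh Qpoly Qhom FQ QE pc ec k t i j rs lp le in auto)
  show ?thesis by (rule main)
qed

end
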